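(* Let $n=2^uv$ with $v$ odd and $u\ge 0$. Suppose $(\varepsilon,\beta,\gamma;(12))\in\mathrm{Par}(n)$, where every cycle of $\beta$ has length divisible by $2^u$. Then: <ul> <li>(i) the number of cycles of odd length of $\beta$ is at least the number of cycles of odd length of $\gamma$;</li> <li>(ii) if $u\ge1$, then $\gamma$ has no cycles of odd length.</li> </ul> Fixed points count as cycles of length $1$.
   Context: A Latin square of order $n$ is an $n\times n$ array with rows, columns and symbols indexed by $[n]$, each symbol occurring once in each row and each column, with triple set $O(L)$. Permutations act on the right; $\varepsilon$ is the identity. A paratopism $(\alpha,\beta,\gamma;(12))$ maps $L$ to $L^\sigma$ with triple set $\{(y\beta,x\alpha,z\gamma):(x,y,z)\in O(L)\}$; it is an autoparatopism of $L$ if $L^\sigma=L$. $\mathrm{Par}(n)$ is the set of paratopisms that are autoparatopisms of at least one Latin square of order $n$. *)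

theory Defs
  imports "HOL-Combinatorics.Permutations"
begin

text \<open>Symbols, rows and columns are indexed by {..<n} (i.e. 0..n-1 instead of 1..n).
A Latin square is a function L with L x y the symbol in row x, column y.\<close>

definition latin_square :: "nat \<Rightarrow> (nat \<Rightarrow> nat \<Rightarrow> nat) \<Rightarrow> bool" where
  "latin_square n L \<longleftrightarrow>
     (\<forall>x<n. \<forall>y<n. L x y < n) \<and>
     (\<forall>x<n. inj_on (\<lambda>y. L x y) {..<n}) \<and>
     (\<forall>y<n. inj_on (\<lambda>x. L x y) {..<n})"

definition triples :: "nat \<Rightarrow> (nat \<Rightarrow> nat \<Rightarrow> nat) \<Rightarrow> (nat \<times> nat \<times> nat) set" where
  "triples n L = {(x, y, L x y) | x y. x < n \<and> y < n}"

text \<open>Image of a triple set under the paratopism (alpha,beta,gamma;(12)):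
  {(y beta, x alpha, z gamma)}; permutations act on the right, so x alpha = alpha x.\<close>
definition par12_image ::
  "(nat \<Rightarrow> nat) \<Rightarrow> (nat \<Rightarrow> nat) \<Rightarrow> (nat \<Rightarrow> nat) \<Rightarrow> (nat \<times> nat \<times> nat) set \<Rightarrow> (nat \<times> nat \<times> nat) set" where
  "par12_image \<alpha> \<beta> \<gamma> T = {(\<beta> y, \<alpha> x, \<gamma> z) | x y z. (x, y, z) \<in> T}"

definition in_Par12 :: "nat \<Rightarrow> (nat \<Rightarrow> nat) \<Rightarrow> (nat \<Rightarrow> nat) \<Rightarrow> (nat \<Rightarrow> nat) \<Rightarrow> bool" where
  "in_Par12 n \<alpha> \<beta> \<gamma> \<longleftrightarrow>
     \<alpha> permutes {..<n} \<and> \<beta> permutes {..<n} \<and> \<gamma> permutes {..<n} \<and>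
     (\<exists>L. latin_square n L \<and> par12_image \<alpha> \<beta> \<gamma> (triples n L) = triples n L)"

definition cycle_of :: "(nat \<Rightarrow> nat) \<Rightarrow> nat \<Rightarrow> nat set" where
  "cycle_of p x = {(p ^^ k) x | k. True}"

definition cycles_of :: "nat \<Rightarrow> (nat \<Rightarrow> nat) \<Rightarrow> nat set set" where
  "cycles_of n p = cycle_of p ` {..<n}"

definition num_odd_cycles :: "nat \<Rightarrow> (nat \<Rightarrow> nat) \<Rightarrow> nat" where
  "num_odd_cycles n p = card {C \<in> cycles_of n p. odd (card C)}"

end

theory Submission
  imports Defs "HOL-Combinatorics.Orbits" "HOL-Number_Theory.Number_Theory"
begin


definition cyc :: "('a \<Rightarrow> 'a) \<Rightarrow> 'a \<Rightarrow> 'a set" where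
  "cyc p x = {(p ^^ k) x | k. True}"

lemma cycle_of_cyc: "cycle_of = cyc"
  by (intro ext) (simp add: cycle_of_def cyc_def)

definition per :: "('a \<Rightarrow> 'a) \<Rightarrow> 'a \<Rightarrow> nat" where
  "per f x = funpow_dist1 f x x"

locale fperm =
  fixes f :: "'a \<Rightarrow> 'a" and A :: "'a set"
  assumes fin: "finite A" and perm: "f permutes A"
begin

lemma self_orb: "x \<in> orbit f x"
proof -
  have "permutation f" unfolding permutation_permutes using fin perm by blast
  then show ?thesis by (rule permutation_self_in_orbit)
qed

lemma per_pos: "per f x > 0" by (simp add: per_def)

lemma per_fix: "(f ^^ per f x) x = x"
  unfolding per_def using funpow_dist1_prop[OF self_orb] .

lemma per_mult: "(f ^^ (per f x * q)) x = x"
proof (induction q)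
  case 0 then show ?case by simp
next
  case (Suc q)
  have "(f ^^ (per f x * Suc q)) x = (f ^^ (per f x)) ((f ^^ (per f x * q)) x)"
    by (simp add: funpow_add)
  then show ?case using Suc per_fix by simp
qed

lemma per_dvd: "(f ^^ m) x = x \<longleftrightarrow> per f x dvd m"
proof
  assume h: "(f ^^ m) x = x"
  have "(f ^^ (m mod per f x)) x = x" using funpow_mod_eq[OF per_fix] h by simp
  moreover have "m mod per f x < per f x" using per_pos by simp
  ultimately have "m mod per f x = 0"
    using funpow_dist1_least[of "m mod per f x" f x x] unfolding per_def by (metis neq0_conv)
  then show "per f x dvd m" by (simp add: dvd_eq_mod_eq_0)
next
  assume "per f x dvd m"
  then obtain q where "m = per f x * q" by auto
  then show "(f ^^ m) x = x" using per_mult by simp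
qed

lemma funpow_mod_per: "(f ^^ (k mod per f x)) x = (f ^^ k) x"
  using funpow_mod_eq[OF per_fix] .

lemma cycle_eq_img: "cyc f x = (\<lambda>k. (f ^^ k) x) ` {0..<per f x}"
proof
  show "cyc f x \<subseteq> (\<lambda>k. (f ^^ k) x) ` {0..<per f x}"
  proof
    fix w assume "w \<in> cyc f x"
    then obtain k where "w = (f ^^ k) x" by (auto simp: cyc_def)
    then have "w = (f ^^ (k mod per f x)) x" using funpow_mod_per by simp
    moreover have "k mod per f x \<in> {0..<per f x}" using per_pos by simp
    ultimately show "w \<in> (\<lambda>k. (f ^^ k) x) ` {0..<per f x}" by blast
  qed
qed (auto simp: cyc_def)

lemma card_cycle: "card (cyc f x) = per f x"
proof -
  have "inj_on (\<lambda>k. (f ^^ k) x) {0..<per f x}"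
    unfolding per_def by (rule inj_on_funpow_dist1[OF self_orb])
  then show ?thesis by (simp add: cycle_eq_img card_image)
qed

lemma finite_cycle: "finite (cyc f x)"
  by (simp add: cycle_eq_img)

lemma cycle_shift: "cyc f ((f ^^ m) x) = cyc f x"
proof
  show "cyc f ((f ^^ m) x) \<subseteq> cyc f x"
  proof
    fix w assume "w \<in> cyc f ((f ^^ m) x)"
    then obtain k where "w = (f ^^ k) ((f ^^ m) x)" by (auto simp: cyc_def)
    then have "w = (f ^^ (k + m)) x" by (simp add: funpow_add)
    then show "w \<in> cyc f x" by (auto simp: cyc_def)
  qed
next
  show "cyc f x \<subseteq> cyc f ((f ^^ m) x)"
  proof
    fix w assume "w \<in> cyc f x"
    then obtain k where k: "w = (f ^^ k) x" by (auto simp: cyc_def)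
    have "(f ^^ (k + per f x * m - m)) ((f ^^ m) x) = (f ^^ (k + per f x * m - m + m)) x"
      by (simp add: funpow_add)
    also have "k + per f x * m - m + m = k + per f x * m"
    proof -
      have "m \<le> per f x * m" using per_pos[of x] by simp
      then show ?thesis by linarith
    qed
    also have "(f ^^ (k + per f x * m)) x = w"
      using k per_mult by (simp add: funpow_add)
    finally show "w \<in> cyc f ((f ^^ m) x)" unfolding cyc_def by blast
  qed
qed

lemma cycle_mem: "w \<in> cyc f x \<Longrightarrow> cyc f w = cyc f x"
proof -
  assume "w \<in> cyc f x"
  then obtain k where "w = (f ^^ k) x" by (auto simp: cyc_def)
  then show ?thesis using cycle_shift[of k x] by simp
qed


end



context fperm begin

lemma funpow_in: "finite S \<Longrightarrow> f ` S \<subseteq> S \<Longrightarrow> x \<in> S \<Longrightarrow> (f ^^ k) x \<in> S"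
  by (induction k) auto

lemma cyc_sub: "f ` S \<subseteq> S \<Longrightarrow> x \<in> S \<Longrightarrow> cyc f x \<subseteq> S"
proof -
  assume a: "f ` S \<subseteq> S" "x \<in> S"
  have "(f ^^ k) x \<in> S" for k using a by (induction k) auto
  then show ?thesis by (auto simp: cyc_def)
qed

lemma dvd_card_inv:
  "finite S \<Longrightarrow> f ` S \<subseteq> S \<Longrightarrow> (\<forall>x\<in>S. d dvd per f x) \<Longrightarrow> d dvd card S"
proof (induction "card S" arbitrary: S rule: less_induct)
  case less
  show ?case
  proof (cases "S = {}")
    case True then show ?thesis by simp
  next
    case False
    then obtain x where x: "x \<in> S" by blast
    define C where "C = cyc f x"
    have CS: "C \<subseteq> S" unfolding C_def using cyc_sub less.prems x by blast
    have xC: "x \<in> C" unfolding C_def cyc_def by (auto intro: exI[of _ 0])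
    define S' where "S' = S - C"
    have fin': "finite S'" using less.prems by (simp add: S'_def)
    have inv': "f ` S' \<subseteq> S'"
    proof
      fix z assume "z \<in> f ` S'"
      then obtain y where y: "y \<in> S'" "z = f y" by blast
      have "z \<in> S" using y less.prems by (auto simp: S'_def)
      moreover have "z \<notin> C"
      proof
        assume "z \<in> C"
        then obtain k where k: "z = (f ^^ k) x" by (auto simp: C_def cyc_def)
        obtain p where p: "per f y = Suc p" using per_pos[of y] by (cases "per f y") auto
        have "y = (f ^^ Suc p) y" using per_fix[of y] p by simp
        also have "\<dots> = (f ^^ p) (f y)" by (metis funpow_Suc_right comp_apply)
        also have "\<dots> = (f ^^ (p + k)) x" using y k by (simp add: funpow_add)
        finally have "y \<in> C" by (auto simp: C_def cyc_def)
        then show False using y by (simp add: S'_def)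
      qed
      ultimately show "z \<in> S'" by (simp add: S'_def)
    qed
    have lt: "card S' < card S"
      using xC CS less.prems(1) unfolding S'_def
      by (metis Diff_iff card_seteq finite_Diff less_le_not_le nat_neq_iff card_mono Diff_subset x)
    have d1: "d dvd card S'"
      using less.hyps[OF lt fin' inv'] less.prems(3) by (simp add: S'_def)
    have d2: "d dvd card C" using less.prems(3) x card_cycle by (simp add: C_def)
    have "card S = card S' + card C"
      using CS less.prems(1) unfolding S'_def
      by (metis card_Diff_subset finite_subset card_mono le_add_diff_inverse2)
    then show ?thesis using d1 d2 by simp
  qed
qed

end



lemma mod_eq_odd:
  fixes a j1 j2 :: nat
  assumes "a dvd Suc (2*j1)" "a dvd Suc (2*j2)"
  shows "j1 mod a = j2 mod a"
proof -
  have oa: "odd a"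
  proof
    assume "even a"
    then have "even (Suc (2*j1))" using assms(1) dvd_trans by blast
    then show False by simp
  qed
  have "int a dvd int (Suc (2*j1)) - int (Suc (2*j2))" using assms by (intro dvd_diff) (simp_all only: int_dvd_int_iff)
  then have "int a dvd 2 * (int j1 - int j2)" by (simp add: algebra_simps)
  moreover have "coprime (int a) 2" using oa by simp
  ultimately have "int a dvd int j1 - int j2" using coprime_dvd_mult_right_iff by blast
  then have "int j1 mod int a = int j2 mod int a" by (simp add: mod_eq_dvd_iff)
  then have "int (j1 mod a) = int (j2 mod a)" by (simp add: of_nat_mod)
  then show ?thesis by simp
qed

locale ctx =
  fixes n :: nat and \<beta> \<gamma> :: "nat \<Rightarrow> nat" and L :: "nat \<Rightarrow> nat \<Rightarrow> nat"
  assumes bp: "\<beta> permutes {..<n}" and gp: "\<gamma> permutes {..<n}" and lat: "latin_square n L"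
    and key: "\<And>x y. x < n \<Longrightarrow> y < n \<Longrightarrow> L (\<beta> y) x = \<gamma> (L x y)"
begin

definition sq :: "(nat \<times> nat) set" where "sq = {..<n} \<times> {..<n}"
definition ff :: "nat \<times> nat \<Rightarrow> nat \<times> nat" where
  "ff c = (if fst c < n \<and> snd c < n then (\<beta> (snd c), fst c) else c)"

lemma bn: "y < n \<Longrightarrow> \<beta> y < n"
  using permutes_in_image[OF bp] by simp

lemma gn: "y < n \<Longrightarrow> \<gamma> y < n"
  using permutes_in_image[OF gp] by simp

lemma bpow_n: "x < n \<Longrightarrow> (\<beta> ^^ j) x < n"
  by (induction j) (auto simp: bn)

lemma gpow_n: "x < n \<Longrightarrow> (\<gamma> ^^ j) x < n"
  by (induction j) (auto simp: gn)

lemma ff_sq: "c \<in> sq \<Longrightarrow> ff c \<in> sq"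
  by (auto simp: sq_def ff_def bn)

lemma ff_perm: "ff permutes sq"
proof (rule bij_imp_permutes)
  have inj: "inj_on ff sq"
  proof (rule inj_onI)
    fix c d assume "c \<in> sq" "d \<in> sq" "ff c = ff d"
    then have e: "\<beta> (snd c) = \<beta> (snd d)" "fst c = fst d" by (auto simp: sq_def ff_def split: if_splits)
    then have "snd c = snd d" using permutes_inj[OF bp] by (simp add: inj_eq)
    then show "c = d" using e by (simp add: prod_eq_iff)
  qed
  have "ff ` sq \<subseteq> sq" using ff_sq by blast
  then have "ff ` sq = sq" using endo_inj_surj[of sq ff] inj by (simp add: sq_def)
  then show "bij_betw ff sq sq" using inj by (simp add: bij_betw_def)
  show "\<And>x. x \<notin> sq \<Longrightarrow> ff x = x" by (auto simp: sq_def ff_def)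
qed

lemma fin_sq: "finite sq" by (simp add: sq_def)

sublocale B: fperm \<beta> "{..<n}" by unfold_locales (auto simp: bp)
sublocale G: fperm \<gamma> "{..<n}" by unfold_locales (auto simp: gp)
sublocale F: fperm ff sq by unfold_locales (auto simp: ff_perm fin_sq)

lemma ffpow_sq: "c \<in> sq \<Longrightarrow> (ff ^^ m) c \<in> sq"
  by (induction m) (auto simp: ff_sq)

lemma ff2: "x < n \<Longrightarrow> y < n \<Longrightarrow> (ff ^^ (2*j)) (x,y) = ((\<beta> ^^ j) x, (\<beta> ^^ j) y)"
proof (induction j)
  case 0 then show ?case by simp
next
  case (Suc j)
  have "(ff ^^ (2 * Suc j)) (x,y) = ff (ff ((ff ^^ (2*j)) (x,y)))" by simp
  also have "\<dots> = ff (ff ((\<beta> ^^ j) x, (\<beta> ^^ j) y))" using Suc by simp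
  also have "\<dots> = ((\<beta> ^^ Suc j) x, (\<beta> ^^ Suc j) y)"
    using bpow_n Suc.prems by (simp add: ff_def bn)
  finally show ?case .
qed

lemma ffL1: "c \<in> sq \<Longrightarrow> case_prod L (ff c) = \<gamma> (case_prod L c)"
  by (auto simp: sq_def ff_def key)

lemma ffL: "c \<in> sq \<Longrightarrow> case_prod L ((ff ^^ m) c) = (\<gamma> ^^ m) (case_prod L c)"
proof (induction m)
  case 0 then show ?case by simp
next
  case (Suc m)
  have "case_prod L ((ff ^^ Suc m) c) = case_prod L (ff ((ff ^^ m) c))" by simp
  also have "\<dots> = \<gamma> (case_prod L ((ff ^^ m) c))" using ffL1 ffpow_sq Suc.prems by blast
  finally show ?case using Suc by simp
qed

lemma perB: "per \<beta> x = card (cycle_of \<beta> x)"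
  by (simp add: cycle_of_cyc B.card_cycle)

lemma lemC:
  assumes c: "(x,y) \<in> sq" and ev: "even (per ff (x,y))"
    and cyc2: "\<forall>C\<in>cycles_of n \<beta>. 2 ^ u dvd card C"
  shows "2 ^ Suc u dvd per ff (x,y)"
proof -
  obtain j where j: "per ff (x,y) = 2 * j" using ev by blast
  have "(ff ^^ (2*j)) (x,y) = (x,y)" using F.per_fix[of "(x,y)"] j by simp
  then have "(\<beta> ^^ j) x = x" using ff2 c by (simp add: sq_def)
  then have "per \<beta> x dvd j" using B.per_dvd[of j x] by simp
  moreover have "cycle_of \<beta> x \<in> cycles_of n \<beta>" using c by (auto simp: cycles_of_def sq_def)
  moreover have "2 ^ u dvd per \<beta> x" using cyc2 perB calculation(2) by simp
  ultimately have "2 ^ u dvd j" using dvd_trans by blast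
  then show ?thesis using j by simp
qed

lemma lemD:
  assumes c: "(x,y) \<in> sq" and j: "per ff (x,y) = Suc (2*j)"
  shows "y = (\<beta> ^^ j) x \<and> per \<beta> x dvd Suc (2*j)"
proof -
  have xy: "x < n" "y < n" using c by (auto simp: sq_def)
  have "(x,y) = (ff ^^ Suc (2*j)) (x,y)" using F.per_fix[of "(x,y)"] j by simp
  also have "\<dots> = ff ((ff ^^ (2*j)) (x,y))" by simp
  also have "\<dots> = ff ((\<beta> ^^ j) x, (\<beta> ^^ j) y)" using ff2[OF xy] by simp
  also have "\<dots> = (\<beta> ((\<beta> ^^ j) y), (\<beta> ^^ j) x)" using xy bpow_n by (simp add: ff_def)
  finally have eq: "(x,y) = (\<beta> ((\<beta> ^^ j) y), (\<beta> ^^ j) x)" .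
  have e1: "x = \<beta> ((\<beta> ^^ j) y)" using arg_cong[OF eq, of fst] by (simp only: fst_conv)
  have e2: "y = (\<beta> ^^ j) x" using arg_cong[OF eq, of snd] by (simp only: snd_conv)
  note e = e1 e2
  have "(\<beta> ^^ (j + j)) x = (\<beta> ^^ j) ((\<beta> ^^ j) x)"
    by (simp only: funpow_add comp_apply)
  moreover have "Suc (2*j) = Suc (j + j)" by simp
  ultimately have "(\<beta> ^^ (Suc (2*j))) x = \<beta> ((\<beta> ^^ j) ((\<beta> ^^ j) x))"
    by (simp only: funpow.simps comp_apply)
  also have "\<dots> = x" by (simp only: e(2)[symmetric] e(1)[symmetric])
  finally have "per \<beta> x dvd Suc (2*j)" using B.per_dvd[of "Suc (2*j)" x] by simp
  then show ?thesis using e(2) by blast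
qed

lemma lemD_odd:
  assumes c: "(x,y) \<in> sq" and o: "odd (per ff (x,y))"
  shows "odd (card (cycle_of \<beta> x))"
proof -
  obtain j where "per ff (x,y) = 2*j+1" using o by (rule oddE)
  then have j: "per ff (x,y) = Suc (2*j)" by simp
  have "per \<beta> x dvd Suc (2*j)" using lemD[OF c j] by blast
  show ?thesis
  proof
    assume "even (card (cycle_of \<beta> x))"
    then have "2 dvd per \<beta> x" using perB by simp
    then have "even (Suc (2*j))" using \<open>per \<beta> x dvd Suc (2*j)\<close> dvd_trans by blast
    then show False by simp
  qed
qed

lemma lem_inj:
  assumes c1: "(x1,y1) \<in> sq" and o1: "odd (per ff (x1,y1))"
    and c2: "(x2,y2) \<in> sq" and o2: "odd (per ff (x2,y2))"
    and eq: "cycle_of \<beta> x1 = cycle_of \<beta> x2"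
  shows "cycle_of \<gamma> (L x1 y1) = cycle_of \<gamma> (L x2 y2)"
proof -
  obtain j1 where "per ff (x1,y1) = 2*j1+1" using o1 by (rule oddE)
  then have j1: "per ff (x1,y1) = Suc (2*j1)" by simp
  obtain j2 where "per ff (x2,y2) = 2*j2+1" using o2 by (rule oddE)
  then have j2: "per ff (x2,y2) = Suc (2*j2)" by simp
  note d1 = lemD[OF c1 j1] and d2 = lemD[OF c2 j2]
  have "x2 \<in> cycle_of \<beta> x2" by (auto simp: cycle_of_def intro: exI[of _ 0])
  then obtain s where s: "x2 = (\<beta> ^^ s) x1" using eq by (auto simp: cycle_of_def)
  have pa: "per \<beta> x2 = per \<beta> x1" using eq perB by simp
  have m: "j1 mod per \<beta> x2 = j2 mod per \<beta> x2" using d1 d2 pa mod_eq_odd by simp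
  have "(\<beta> ^^ j1) x2 = (\<beta> ^^ j2) x2"
    using B.funpow_mod_per[of j1 x2] B.funpow_mod_per[of j2 x2] m by simp
  moreover have "(\<beta> ^^ j1) ((\<beta> ^^ s) x1) = (\<beta> ^^ (j1 + s)) x1" by (simp add: funpow_add)
  moreover have "(\<beta> ^^ s) ((\<beta> ^^ j1) x1) = (\<beta> ^^ (s + j1)) x1" by (simp add: funpow_add)
  ultimately have y2: "y2 = (\<beta> ^^ s) y1" using d1 d2 s by (simp add: add.commute)
  have xy1: "x1 < n" "y1 < n" using c1 by (auto simp: sq_def)
  have "(ff ^^ (2*s)) (x1,y1) = (x2,y2)" using ff2[OF xy1] s y2 by simp
  then have "L x2 y2 = (\<gamma> ^^ (2*s)) (L x1 y1)" using ffL[OF c1, of "2*s"] by simp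
  then show ?thesis using G.cycle_shift cycle_of_cyc by simp
qed

end



context ctx begin

lemma lemM:
  assumes z0: "z0 < n" and oz: "odd (card (cycle_of \<gamma> z0))"
    and cyc2: "\<forall>C\<in>cycles_of n \<beta>. 2 ^ u dvd card C"
    and nv: "n = 2 ^ u * v" and ov: "odd v"
  shows "\<exists>c\<in>sq. case_prod L c \<in> cycle_of \<gamma> z0 \<and> odd (per ff c)"
proof (rule ccontr)
  assume na: "\<not> ?thesis"
  define Z where "Z = cycle_of \<gamma> z0"
  define S where "S = (SIGMA x:{..<n}. {y. y < n \<and> L x y \<in> Z})"
  have Smem: "c \<in> S \<longleftrightarrow> c \<in> sq \<and> case_prod L c \<in> Z" for c
    by (cases c) (auto simp: S_def sq_def)
  have Sq: "S \<subseteq> sq" using Smem by blast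
  have finS: "finite S" using Sq fin_sq finite_subset by blast
  have Zg: "\<gamma> w \<in> Z" if wZ: "w \<in> Z" for w
  proof -
    obtain k where "w = (\<gamma> ^^ k) z0" using wZ by (auto simp: Z_def cycle_of_def)
    then have "\<gamma> w = (\<gamma> ^^ Suc k) z0" by simp
    then show ?thesis unfolding Z_def cycle_of_def by blast
  qed
  have Zn: "Z \<subseteq> {..<n}" using gpow_n z0 by (auto simp: Z_def cycle_of_def)
  have inv: "ff ` S \<subseteq> S"
  proof
    fix d assume "d \<in> ff ` S"
    then obtain c where c: "c \<in> S" "d = ff c" by blast
    then have "c \<in> sq" "case_prod L c \<in> Z" using Smem by auto
    then have "ff c \<in> sq" "case_prod L (ff c) \<in> Z" using ff_sq ffL1 Zg by auto
    then show "d \<in> S" using c Smem by simp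
  qed
  have dv: "\<forall>c\<in>S. 2 ^ Suc u dvd per ff c"
  proof
    fix c assume cS: "c \<in> S"
    then have cs: "c \<in> sq" "case_prod L c \<in> Z" using Smem by auto
    then have "even (per ff c)" using na by (auto simp: Z_def)
    then show "2 ^ Suc u dvd per ff c" using lemC[of "fst c" "snd c" u] cs cyc2 by simp
  qed
  have d: "2 ^ Suc u dvd card S" using F.dvd_card_inv[OF finS inv dv] .
  have row: "card {y. y < n \<and> L x y \<in> Z} = card Z" if x: "x < n" for x
  proof -
    have inj: "inj_on (L x) {..<n}" using lat x by (simp add: latin_square_def)
    have sub: "L x ` {..<n} \<subseteq> {..<n}" using lat x by (auto simp: latin_square_def)
    have img: "L x ` {..<n} = {..<n}" using endo_inj_surj[OF _ sub inj] by simp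
    have "L x ` {y. y < n \<and> L x y \<in> Z} = Z"
    proof
      show "L x ` {y. y < n \<and> L x y \<in> Z} \<subseteq> Z" by auto
      show "Z \<subseteq> L x ` {y. y < n \<and> L x y \<in> Z}"
      proof
        fix w assume w: "w \<in> Z"
        then have "w \<in> L x ` {..<n}" using Zn img by auto
        then obtain y where "y < n" "w = L x y" by auto
        then show "w \<in> L x ` {y. y < n \<and> L x y \<in> Z}" using w by auto
      qed
    qed
    moreover have "inj_on (L x) {y. y < n \<and> L x y \<in> Z}"
      using inj by (rule inj_on_subset) auto
    ultimately show ?thesis using card_image by metis
  qed
  have "card S = (\<Sum>x\<in>{..<n}. card {y. y < n \<and> L x y \<in> Z})"
    unfolding S_def by (rule card_SigmaI) auto
  also have "\<dots> = (\<Sum>x\<in>{..<n}. card Z)" using row by (intro sum.cong) auto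
  also have "\<dots> = n * card Z" by simp
  finally have "2 ^ Suc u dvd 2 ^ u * (v * card Z)" using d nv by (simp add: mult.assoc)
  then have "2 dvd v * card Z" by simp
  then show False using ov oz by (simp add: Z_def)
qed

end

theorem theorem4p6:
  fixes n u v :: nat and \<beta> \<gamma> :: "nat \<Rightarrow> nat"
  assumes "n = 2 ^ u * v" and "odd v"
    and "in_Par12 n id \<beta> \<gamma>"
    and "\<forall>C \<in> cycles_of n \<beta>. 2 ^ u dvd card C"
  shows "num_odd_cycles n \<beta> \<ge> num_odd_cycles n \<gamma>
         \<and> (u \<ge> 1 \<longrightarrow> num_odd_cycles n \<gamma> = 0)"
proof -
  obtain L where bp: "\<beta> permutes {..<n}" and gp: "\<gamma> permutes {..<n}"
    and lat: "latin_square n L" and eq: "par12_image id \<beta> \<gamma> (triples n L) = triples n L"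
    using assms(3) unfolding in_Par12_def by blast
  have key: "L (\<beta> y) x = \<gamma> (L x y)" if "x < n" "y < n" for x y
  proof -
    have "(x, y, L x y) \<in> triples n L" using that by (auto simp: triples_def)
    then have "(\<beta> y, x, \<gamma> (L x y)) \<in> par12_image id \<beta> \<gamma> (triples n L)"
      unfolding par12_image_def by force
    then have "(\<beta> y, x, \<gamma> (L x y)) \<in> triples n L" using eq by simp
    then show ?thesis by (auto simp: triples_def)
  qed
  interpret ctx n \<beta> \<gamma> L by unfold_locales (auto simp: bp gp lat key)
  define OG where "OG = {C \<in> cycles_of n \<gamma>. odd (card C)}"
  define OB where "OB = {C \<in> cycles_of n \<beta>. odd (card C)}"
  define pick where "pick Z = (SOME c. c \<in> sq \<and> case_prod L c \<in> Z \<and> odd (per ff c))" for Z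
  have pk: "pick Z \<in> sq \<and> case_prod L (pick Z) \<in> Z \<and> odd (per ff (pick Z))
            \<and> Z = cycle_of \<gamma> (case_prod L (pick Z))" if ZOG: "Z \<in> OG" for Z
  proof -
    obtain z0 where z0: "z0 < n" "Z = cycle_of \<gamma> z0" using ZOG by (auto simp: OG_def cycles_of_def)
    have "odd (card (cycle_of \<gamma> z0))" using that z0 by (simp add: OG_def)
    then have "\<exists>c. c \<in> sq \<and> case_prod L c \<in> Z \<and> odd (per ff c)"
      using lemM[OF z0(1) _ assms(4) assms(1) assms(2)] z0(2) by blast
    then have p: "pick Z \<in> sq \<and> case_prod L (pick Z) \<in> Z \<and> odd (per ff (pick Z))"
      unfolding pick_def by (rule someI_ex)
    then have "cyc \<gamma> (case_prod L (pick Z)) = cyc \<gamma> z0"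
      using G.cycle_mem z0(2) cycle_of_cyc by simp
    then show ?thesis using p z0(2) cycle_of_cyc by simp
  qed
  define h where "h Z = cycle_of \<beta> (fst (pick Z))" for Z
  have hodd: "odd (card (h Z)) \<and> fst (pick Z) < n" if "Z \<in> OG" for Z
  proof -
    obtain a b where ab: "pick Z = (a,b)" by (cases "pick Z")
    have "(a,b) \<in> sq" "odd (per ff (a,b))" using pk[OF that] ab by auto
    then show ?thesis using lemD_odd ab by (auto simp: h_def sq_def)
  qed
  have hOB: "h ` OG \<subseteq> OB"
    using hodd by (auto simp: OB_def cycles_of_def h_def)
  have hinj: "inj_on h OG"
  proof (rule inj_onI)
    fix Z1 Z2 assume z: "Z1 \<in> OG" "Z2 \<in> OG" "h Z1 = h Z2"
    obtain a1 b1 where ab1: "pick Z1 = (a1,b1)" by (cases "pick Z1")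
    obtain a2 b2 where ab2: "pick Z2 = (a2,b2)" by (cases "pick Z2")
    have p1: "(a1,b1) \<in> sq" "odd (per ff (a1,b1))" "Z1 = cycle_of \<gamma> (L a1 b1)"
      using pk[OF z(1)] ab1 by auto
    have p2: "(a2,b2) \<in> sq" "odd (per ff (a2,b2))" "Z2 = cycle_of \<gamma> (L a2 b2)"
      using pk[OF z(2)] ab2 by auto
    have "cycle_of \<beta> a1 = cycle_of \<beta> a2" using z(3) ab1 ab2 by (simp add: h_def)
    then have "cycle_of \<gamma> (L a1 b1) = cycle_of \<gamma> (L a2 b2)"
      using lem_inj[OF p1(1,2) p2(1,2)] by blast
    then show "Z1 = Z2" using p1(3) p2(3) by simp
  qed
  have finOB: "finite OB" by (simp add: OB_def cycles_of_def)
  have i: "card OG \<le> card OB" using card_inj_on_le[OF hinj hOB finOB] .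
  have ii: "OG = {}" if "u \<ge> 1"
  proof (rule ccontr)
    assume "OG \<noteq> {}"
    then obtain Z where Z: "Z \<in> OG" by blast
    have "h Z \<in> cycles_of n \<beta>" using hodd[OF Z] by (auto simp: h_def cycles_of_def)
    then have "2 ^ u dvd card (h Z)" using assms(4) by blast
    moreover have "(2::nat) dvd 2 ^ u" using that by (simp add: dvd_power)
    ultimately have "even (card (h Z))" using dvd_trans by blast
    then show False using hodd[OF Z] by simp
  qed
  have "num_odd_cycles n \<gamma> = card OG" "num_odd_cycles n \<beta> = card OB"
    by (simp_all add: num_odd_cycles_def OG_def OB_def)
  then show ?thesis using i ii by auto
qed


end
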